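(* Let $K$ be an arbitrary field, let $V_1,\dots,V_m$ and $V$ be $K$-vector spaces, and let $f\colon \prod_{i=1}^m V_i\to V$ be a multilinear map (linear in each argument separately). If $\operatorname{Im} f$ contains two vectors that are not proportional, then $\operatorname{Im} f$ contains a $2$-dimensional linear subspace of $V$. In particular, if $\dim V=2$ then $\operatorname{Im} f=V$. *)

theory Defs
  imports Complex_Main "HOL-Library.FuncSet"
begin

definition multilinear_on ::
  "('k::field \<Rightarrow> 'b::ab_group_add \<Rightarrow> 'b) \<Rightarrow> ('k \<Rightarrow> 'c::ab_group_add \<Rightarrow> 'c) \<Rightarrow> nat \<Rightarrow>
   (nat \<Rightarrow> 'b set) \<Rightarrow> ((nat \<Rightarrow> 'b) \<Rightarrow> 'c) \<Rightarrow> bool" where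
  "multilinear_on sV sW m S f \<longleftrightarrow>
     (\<forall>i<m. \<forall>x\<in>PiE {..<m} S. \<forall>u\<in>S i. \<forall>v\<in>S i. \<forall>c.
        f (x(i := u + v)) = f (x(i := u)) + f (x(i := v)) \<and>
        f (x(i := sV c u)) = sW c (f (x(i := u))))"

end

theory Submission
  imports Defs
begin

lemma upd_PiE: "x \<in> PiE {..<m} S \<Longrightarrow> i < m \<Longrightarrow> a \<in> S i \<Longrightarrow> x(i:=a) \<in> PiE {..<m} S"
  by (auto simp: PiE_iff extensional_def)

lemma ml_add: "multilinear_on sV sW m S f \<Longrightarrow> i < m \<Longrightarrow> x \<in> PiE {..<m} S \<Longrightarrow> u \<in> S i \<Longrightarrow> v \<in> S i
  \<Longrightarrow> f (x(i := u + v)) = f (x(i := u)) + f (x(i := v))"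
  unfolding multilinear_on_def by blast

lemma ml_scale: "multilinear_on sV sW m S f \<Longrightarrow> i < m \<Longrightarrow> x \<in> PiE {..<m} S \<Longrightarrow> u \<in> S i
  \<Longrightarrow> f (x(i := sV c u)) = sW c (f (x(i := u)))"
  unfolding multilinear_on_def by blast

context vector_space
begin

lemma dep_trans:
  assumes "c \<noteq> 0"
    and "(\<exists>s. a = s *s c) \<or> (\<exists>s. c = s *s a)"
    and "(\<exists>s. c = s *s b) \<or> (\<exists>s. b = s *s c)"
  shows "(\<exists>s. a = s *s b) \<or> (\<exists>s. b = s *s a)"
proof -
  have A: "\<exists>s. a = s *s c"
  proof (cases "\<exists>s. a = s *s c")
    case False
    then obtain s where s: "c = s *s a" using assms(2) by blast
    with assms(1) have "s \<noteq> 0" by auto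
    then have "a = inverse s *s c" using s by simp
    then show ?thesis by blast
  qed
  have B: "\<exists>s. b = s *s c"
  proof (cases "\<exists>s. b = s *s c")
    case False
    then obtain s where s: "c = s *s b" using assms(3) by blast
    with assms(1) have "s \<noteq> 0" by auto
    then have "b = inverse s *s c" using s by simp
    then show ?thesis by blast
  qed
  from A obtain s where s: "a = s *s c" by blast
  from B obtain t where t: "b = t *s c" by blast
  show ?thesis
  proof (cases "t = 0")
    case True
    then have "b = 0 *s a" using t by simp
    then show ?thesis by blast
  next
    case False
    then have "c = inverse t *s b" using t by simp
    then have "a = (s * inverse t) *s b" using s by simp
    then show ?thesis by blast
  qed
qed

end

lemma agree_step: "\<forall>j\<ge>Suc n. x j = y j \<Longrightarrow> \<forall>j\<ge>n. (x(n:=c)) j = (y(n:=c)) j"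
proof (intro allI impI)
  fix j assume "\<forall>j\<ge>Suc n. x j = y j" "n \<le> j"
  then show "(x(n:=c)) j = (y(n:=c)) j" by (cases "j = n") auto
qed

lemma all_dep:
  fixes sV :: "'k::field \<Rightarrow> 'b::ab_group_add \<Rightarrow> 'b"
    and sW :: "'k \<Rightarrow> 'c::ab_group_add \<Rightarrow> 'c"
  assumes VS: "vector_space sV" and WS: "vector_space sW"
    and sub: "\<forall>i<m. module.subspace sV (S i)"
    and ml: "multilinear_on sV sW m S f"
    and H: "\<forall>z\<in>PiE {..<m} S. \<forall>i<m. \<forall>a\<in>S i. \<forall>b\<in>S i.
       (\<exists>s. f (z(i:=a)) = sW s (f (z(i:=b)))) \<or> (\<exists>s. f (z(i:=b)) = sW s (f (z(i:=a))))"
  shows "x \<in> PiE {..<m} S \<Longrightarrow> y \<in> PiE {..<m} S \<Longrightarrow> \<forall>j\<ge>n. x j = y j \<Longrightarrow>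
     (\<exists>s. f x = sW s (f y)) \<or> (\<exists>s. f y = sW s (f x))"
proof (induction n arbitrary: x y)
  interpret W: vector_space sW by (rule WS)
  case 0
  then have "x = y" by auto
  then have "f x = sW 1 (f y)" by simp
  then show ?case by blast
next
  interpret V: vector_space sV by (rule VS)
  interpret W: vector_space sW by (rule WS)
  case (Suc n)
  show ?case
  proof (cases "n < m")
    case False
    then have "x n = y n" using Suc.prems(1,2) by (simp add: PiE_def extensional_def)
    then have "\<forall>j\<ge>n. x j = y j" using agree_step[OF Suc.prems(3), of "x n"] by (metis fun_upd_triv)
    then show ?thesis using Suc.IH Suc.prems by blast
  next
    case True
    define a0 where "a0 = x n"
    define b0 where "b0 = y n"
    have a0: "a0 \<in> S n" using Suc.prems(1) True by (auto simp: a0_def PiE_iff)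
    have b0: "b0 \<in> S n" using Suc.prems(2) True by (auto simp: b0_def PiE_iff)
    have ab: "a0 + b0 \<in> S n" using sub True a0 b0 V.subspace_add by blast
    have xa: "x(n:=a0) = x" by (simp add: a0_def)
    have yb: "y(n:=b0) = y" by (simp add: b0_def)
    let ?x1 = "x(n:=b0)" and ?y1 = "y(n:=a0)"
    have x1: "?x1 \<in> PiE {..<m} S" by (rule upd_PiE[OF Suc.prems(1) True b0])
    have y1: "?y1 \<in> PiE {..<m} S" by (rule upd_PiE[OF Suc.prems(2) True a0])
    have d1: "(\<exists>s. f x = sW s (f ?y1)) \<or> (\<exists>s. f ?y1 = sW s (f x))"
      by (rule Suc.IH[OF Suc.prems(1) y1 agree_step[OF Suc.prems(3), of a0, unfolded xa]])
    have d2: "(\<exists>s. f ?y1 = sW s (f y)) \<or> (\<exists>s. f y = sW s (f ?y1))"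
      using H[rule_format, OF Suc.prems(2) True a0 b0] yb by simp
    have d3: "(\<exists>s. f ?x1 = sW s (f y)) \<or> (\<exists>s. f y = sW s (f ?x1))"
      by (rule Suc.IH[OF x1 Suc.prems(2) agree_step[OF Suc.prems(3), of b0, unfolded yb]])
    have d4: "(\<exists>s. f x = sW s (f ?x1)) \<or> (\<exists>s. f ?x1 = sW s (f x))"
      using H[rule_format, OF Suc.prems(1) True a0 b0] xa by simp
    show ?thesis
    proof (cases "f ?y1 \<noteq> 0")
      case True
      show ?thesis by (rule W.dep_trans[OF True d1 d2])
    next
      case c0: False
      show ?thesis
      proof (cases "f ?x1 \<noteq> 0")
        case True
        from W.dep_trans[OF True _ _, of "f x" "f y"] d3 d4 show ?thesis by blast
      next
        case False
        have ex: "f (x(n:=a0+b0)) = f x"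
          using ml_add[OF ml True Suc.prems(1) a0 b0] False xa by simp
        have ey: "f (y(n:=a0+b0)) = f y"
          using ml_add[OF ml True Suc.prems(2) a0 b0] c0 yb by simp
        have "(\<exists>s. f (x(n:=a0+b0)) = sW s (f (y(n:=a0+b0)))) \<or> (\<exists>s. f (y(n:=a0+b0)) = sW s (f (x(n:=a0+b0))))"
          by (rule Suc.IH[OF upd_PiE[OF Suc.prems(1) True ab] upd_PiE[OF Suc.prems(2) True ab]
              agree_step[OF Suc.prems(3)]])
        then show ?thesis using ex ey by simp
      qed
    qed
  qed
qed

theorem lemma1p31:
  fixes sV :: "'k::field \<Rightarrow> 'b::ab_group_add \<Rightarrow> 'b"
    and sW :: "'k \<Rightarrow> 'c::ab_group_add \<Rightarrow> 'c"
    and m :: nat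
    and S :: "nat \<Rightarrow> 'b set"
    and f :: "(nat \<Rightarrow> 'b) \<Rightarrow> 'c"
  assumes VS: "vector_space sV" and WS: "vector_space sW"
    and sub: "\<forall>i<m. module.subspace sV (S i)"
    and ml: "multilinear_on sV sW m S f"
    and np: "\<exists>u\<in>f ` PiE {..<m} S. \<exists>v\<in>f ` PiE {..<m} S.
               (\<nexists>c. u = sW c v) \<and> (\<nexists>c. v = sW c u)"
  shows "(\<exists>W. module.subspace sW W \<and> vector_space.dim sW W = 2 \<and> W \<subseteq> f ` PiE {..<m} S)
         \<and> (vector_space.dim sW (UNIV :: 'c set) = 2 \<longrightarrow> f ` PiE {..<m} S = UNIV)"
proof -
  interpret V: vector_space sV by (rule VS)
  interpret W: vector_space sW by (rule WS)
  have "\<not> (\<forall>z\<in>PiE {..<m} S. \<forall>i<m. \<forall>a\<in>S i. \<forall>b\<in>S i.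
       (\<exists>s. f (z(i:=a)) = sW s (f (z(i:=b)))) \<or> (\<exists>s. f (z(i:=b)) = sW s (f (z(i:=a)))))"
  proof
    assume H: "\<forall>z\<in>PiE {..<m} S. \<forall>i<m. \<forall>a\<in>S i. \<forall>b\<in>S i.
       (\<exists>s. f (z(i:=a)) = sW s (f (z(i:=b)))) \<or> (\<exists>s. f (z(i:=b)) = sW s (f (z(i:=a))))"
    from np obtain x y where x: "x \<in> PiE {..<m} S" and y: "y \<in> PiE {..<m} S"
      and nd: "(\<nexists>c. f x = sW c (f y)) \<and> (\<nexists>c. f y = sW c (f x))" by blast
    have "\<forall>j\<ge>m. x j = y j" using x y by (auto simp: PiE_def extensional_def)
    from all_dep[OF VS WS sub ml H x y this] nd show False by blast
  qed
  then obtain z i a b where z: "z \<in> PiE {..<m} S" and i: "i < m" and a: "a \<in> S i" and b: "b \<in> S i"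
    and nd: "(\<nexists>s. f (z(i:=a)) = sW s (f (z(i:=b)))) \<and> (\<nexists>s. f (z(i:=b)) = sW s (f (z(i:=a))))"
    by blast
  define p where "p = f (z(i:=a))"
  define q where "q = f (z(i:=b))"
  have nd': "(\<nexists>s. p = sW s q) \<and> (\<nexists>s. q = sW s p)" using nd by (simp add: p_def q_def)
  have pq: "p \<noteq> q" using nd' by (metis W.scale_one)
  have q0: "q \<noteq> 0" using nd' by (metis W.scale_zero_left)
  have spq: "W.span {p, q} = {sW k p + sW t q | k t. True}"
    by (auto simp: W.span_insert W.span_singleton) (metis add.commute diff_eq_eq, metis add_diff_cancel_left')
  have sub_im: "W.span {p, q} \<subseteq> f ` PiE {..<m} S"
  proof
    fix w assume "w \<in> W.span {p, q}"
    then obtain k t where w: "w = sW k p + sW t q" using spq by blast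
    have ka: "sV k a \<in> S i" using sub i a V.subspace_scale by blast
    have tb: "sV t b \<in> S i" using sub i b V.subspace_scale by blast
    have "f (z(i := sV k a + sV t b)) = w"
      using ml_add[OF ml i z ka tb] ml_scale[OF ml i z a] ml_scale[OF ml i z b] unfolding w p_def q_def by simp
    moreover have "z(i := sV k a + sV t b) \<in> PiE {..<m} S"
      using upd_PiE[OF z i] V.subspace_add sub i ka tb by blast
    ultimately show "w \<in> f ` PiE {..<m} S" by blast
  qed
  have ind: "W.independent {p, q}"
    using pq q0 nd' by (auto simp: W.independent_insert W.span_singleton)
  have dim2: "W.dim (W.span {p, q}) = 2"
    using W.dim_span_eq_card_independent[OF ind] pq by simp
  have part2: "f ` PiE {..<m} S = UNIV" if d: "W.dim (UNIV :: 'c set) = 2"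
  proof -
    obtain B where B: "W.independent B" "UNIV \<subseteq> W.span B" "card B = 2"
      using W.basis_exists[of UNIV] d by metis
    have fB: "finite B" using B(3) by (metis card.infinite zero_neq_numeral)
    have "W.span {p, q} = UNIV"
    proof (rule ccontr)
      assume "W.span {p, q} \<noteq> UNIV"
      then obtain w where w: "w \<notin> W.span {p, q}" by blast
      then have wpq: "w \<notin> {p, q}" using W.span_base by blast
      have "W.independent (insert w {p, q})" using W.independent_insertI[OF w ind] .
      from W.independent_span_bound[OF fB this] B(2,3) wpq pq show False by auto
    qed
    then show ?thesis using sub_im by blast
  qed
  show ?thesis using sub_im dim2 part2 W.subspace_span by blast
qed

end
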